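(* (Strong duality.) For all $x\in\mathbb{R}^n$, \[ \sup_{\mathbf{u}\in\mathcal{U}_{\mathbb{F}}(0)} J(0,x;\mathbf{u})=\inf_{h\in\mathcal{M}_{\mathbb{F}}(0)}\mathbb{E}_{0,x}\Big[\sup_{\mathbf{u}\in\mathcal{U}(0)}\Big\{\Lambda(x_T)+\int_0^T g(t,x_t,u_t)\,dt-h(\mathbf{u},\mathbf{w})\Big\}\Big], \] and the infimum on the right is attained by the penalty $h^*(\mathbf{u},\mathbf{w})=\Lambda(x_T)+\int_0^T g(t,x_t,u_t)\,dt-V(0,x)$, where $V(0,x)=\sup_{\mathbf{u}\in\mathcal{U}_{\mathbb{F}}(0)}J(0,x;\mathbf{u})$.
   Context: Let $(\Omega,\mathcal{F},\mathbb{P})$ carry an $m$-dimensional Brownian motion $\mathbf{w}=(w_t)_{t\in[0,T]}$ with natural augmented filtration $\mathbb{F}=\{\mathcal{F}_t\}$, $\mathcal{F}=\mathcal{F}_T$. The controlled state $x_t\in\mathbb{R}^n$ follows $dx_t=b(t,x_t,u_t)\,dt+\sigma(t,x_t)\,dw_t$, $0\le t\le T$, where $u_t\in\mathcal{U}\subset\mathbb{R}^{d_u}$, $b:[0,T]\times\mathbb{R}^n\times\mathcal{U}\to\mathbb{R}^n$, $\sigma:[0,T]\times\mathbb{R}^n\to\mathbb{R}^{n\times m}$ are continuous, with linear growth $\|b(t,x,u)\|+\|\sigma(t,x)\|\le C_1(1+\|x\|+\|u\|)$ and Lipschitz in $(t,x)$ uniformly in $u$. $\mathcal{U}_{\mathbb{F}}(t)$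 denotes admissible strategies at time $t$: $\mathbb{F}$-progressively measurable $\mathcal{U}$-valued $\mathbf{u}=(u_s)_{s\in[t,T]}$ with $\mathbb{E}[\int_t^T\|u_s\|^2ds]<\infty$ and $\mathbb{E}_{t,x}[\sup_{s\in[t,T]}\|x_s\|^2]<\infty$, where $\mathbb{E}_{t,x}[\cdot]=\mathbb{E}[\cdot\mid x_t=x]$. $\mathcal{U}(t)$ denotes all $\mathcal{B}([t,T])\times\mathcal{F}$-measurable $\mathcal{U}$-valued processes (possibly anticipative). It is assumed that for each $\mathbf{u}\in\mathcal{U}(0)$ and $x_0=x$ the state equation has a unique $\mathcal{B}([0,T])\times\mathcal{F}$-measurable solution $(x_t)$, which is the usual Itô solution when $\mathbf{u}\in\mathcal{U}_{\mathbb{F}}(0)$. $\Lambda:\mathbb{R}^n\to\mathbb{R}$ and $g:[0,T]\times\mathbb{R}^n\times\mathcal{U}\to\mathbb{R}$ have polynomial growth ($|\Lambda(x)|\le C_\Lambda(1+\|x\|^{c_\Lambda})$, $|g(t,x,u)|\le C_g(1+\|x\|^{c_g}+\|u\|^{c_g})$). $J(t,x;\mathbf{u})=\mathbb{E}_{t,x}[\Lambda(x_T)+\int_t^T g(s,x_s,u_s)ds]$. $\mathcal{M}_{\mathbb{F}}(0)$ is the set of functions $h(\mathbf{u},\mathbf{w})$ of $\mathbf{u}\in\mathcal{U}(0)$ and a Brownian path $\mathbf{w}$ such that $\mathbb{E}_{0,x}[h(\mathbf{u},\mathbf{w})]\le0$ for all $x\in\mathbb{R}^n$ and all $\mathbf{u}\in\mathcal{U}_{\mathbb{F}}(0)$.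 *)

theory Defs
  imports "HOL-Probability.Probability"
begin


definition brownian_motion :: "'w measure \<Rightarrow> real \<Rightarrow> (real \<Rightarrow> 'w \<Rightarrow> real^('m::finite)) \<Rightarrow> bool" where
  "brownian_motion P T W \<longleftrightarrow>
     prob_space P \<and>
     (\<forall>t\<in>{0..T}. W t \<in> borel_measurable P) \<and>
     (\<forall>\<omega>\<in>space P. W 0 \<omega> = 0 \<and> continuous_on {0..T} (\<lambda>t. W t \<omega>)) \<and>
     (\<forall>ts. sorted ts \<and> set ts \<subseteq> {0..T} \<longrightarrow>
        prob_space.indep_vars P (\<lambda>_. borel) (\<lambda>j \<omega>. W (ts ! Suc j) \<omega> - W (ts ! j) \<omega>)
          {..<length ts - 1}) \<and>
     (\<forall>s t. 0 \<le> s \<and> s < t \<and> t \<le> T \<longrightarrow>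
        prob_space.indep_vars P (\<lambda>_. borel) (\<lambda>i \<omega>. (W t \<omega> - W s \<omega>) $ i) UNIV \<and>
        (\<forall>i. distributed P lborel (\<lambda>\<omega>. (W t \<omega> - W s \<omega>) $ i) (normal_density 0 (sqrt (t - s)))))"

definition nat_filt :: "'w measure \<Rightarrow> (real \<Rightarrow> 'w \<Rightarrow> real^('m::finite)) \<Rightarrow> real \<Rightarrow> 'w set set" where
  "nat_filt P W t = sigma_sets (space P)
     ({(W s) -` B \<inter> space P | s B. s \<in> {0..t} \<and> B \<in> sets borel} \<union>
      {N. N \<subseteq> space P \<and> (\<exists>A\<in>null_sets P. N \<subseteq> A)})"

definition filt_measure :: "'w measure \<Rightarrow> (real \<Rightarrow> 'w \<Rightarrow> real^('m::finite)) \<Rightarrow> real \<Rightarrow> 'w measure" where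
  "filt_measure P W t = sigma (space P) (nat_filt P W t)"

definition progressive :: "'w measure \<Rightarrow> (real \<Rightarrow> 'w \<Rightarrow> real^('m::finite)) \<Rightarrow> real \<Rightarrow> (real \<Rightarrow> 'w \<Rightarrow> real^('d::finite)) \<Rightarrow> bool" where
  "progressive P W T u \<longleftrightarrow> (\<forall>t\<in>{0..T}.
     (\<lambda>(s,\<omega>). u s \<omega>) \<in> borel_measurable (restrict_space lborel {0..t} \<Otimes>\<^sub>M filt_measure P W t))"

text \<open>U(0): all B([0,T]) x F - measurable Uset-valued processes (possibly anticipative).\<close>
definition Uall :: "'w measure \<Rightarrow> real \<Rightarrow> (real^'d) set \<Rightarrow> (real \<Rightarrow> 'w \<Rightarrow> real^('d::finite)) set" where
  "Uall P T Uset = {u. (\<lambda>(s,\<omega>). u s \<omega>) \<in> borel_measurable (restrict_space lborel {0..T} \<Otimes>\<^sub>M P) \<and>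
                     (\<forall>s\<in>{0..T}. \<forall>\<omega>\<in>space P. u s \<omega> \<in> Uset)}"

text \<open>U_F(0) relative to the initial state x: progressively measurable, Uset-valued,
  E[int_0^T |u|^2] < oo and E_{0,x}[sup_[0,T] |x_s|^2] < oo.  X x u s \<omega> is the state.\<close>
definition UF :: "'w measure \<Rightarrow> (real \<Rightarrow> 'w \<Rightarrow> real^('m::finite)) \<Rightarrow> real \<Rightarrow> (real^'d) set
     \<Rightarrow> (real^'n \<Rightarrow> (real \<Rightarrow> 'w \<Rightarrow> real^('d::finite)) \<Rightarrow> real \<Rightarrow> 'w \<Rightarrow> real^'n) \<Rightarrow> real^'n \<Rightarrow> (real \<Rightarrow> 'w \<Rightarrow> real^('d::finite)) set" where
  "UF P W T Uset X x = {u. progressive P W T u \<and>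
     (\<forall>s\<in>{0..T}. \<forall>\<omega>\<in>space P. u s \<omega> \<in> Uset) \<and>
     (\<integral>\<^sup>+\<omega>. (\<integral>\<^sup>+s\<in>{0..T}. ennreal ((norm (u s \<omega>))\<^sup>2) \<partial>lborel) \<partial>P) < \<infinity> \<and>
     (\<integral>\<^sup>+\<omega>. (SUP s\<in>{0..T}. ennreal ((norm (X x u s \<omega>))\<^sup>2)) \<partial>P) < \<infinity>}"

text \<open>Expectation of an extended-real random variable (quasi-integral):
  E[f] = E[f^+] - E[f^-], with the convention E[f] = +oo whenever E[f^+] = +oo.\<close>
definition Eer :: "'w measure \<Rightarrow> ('w \<Rightarrow> ereal) \<Rightarrow> ereal" where
  "Eer P f = (if (\<integral>\<^sup>+\<omega>. e2ennreal (f \<omega>) \<partial>P) = \<infinity> then \<infinity>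
              else enn2ereal (\<integral>\<^sup>+\<omega>. e2ennreal (f \<omega>) \<partial>P) - enn2ereal (\<integral>\<^sup>+\<omega>. e2ennreal (- f \<omega>) \<partial>P))"

definition reward :: "real \<Rightarrow> (real^'n \<Rightarrow> real) \<Rightarrow> (real \<Rightarrow> real^'n \<Rightarrow> real^'d \<Rightarrow> real)
     \<Rightarrow> (real^'n \<Rightarrow> (real \<Rightarrow> 'w \<Rightarrow> real^('d::finite)) \<Rightarrow> real \<Rightarrow> 'w \<Rightarrow> real^'n) \<Rightarrow> real^'n \<Rightarrow> (real \<Rightarrow> 'w \<Rightarrow> real^('d::finite)) \<Rightarrow> 'w \<Rightarrow> real" where
  "reward T Lam g X x u \<omega> = Lam (X x u T \<omega>) + (LINT s:{0..T}|lborel. g s (X x u s \<omega>) (u s \<omega>))"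

definition Jval :: "'w measure \<Rightarrow> real \<Rightarrow> (real^'n \<Rightarrow> real) \<Rightarrow> (real \<Rightarrow> real^'n \<Rightarrow> real^'d \<Rightarrow> real)
     \<Rightarrow> (real^'n \<Rightarrow> (real \<Rightarrow> 'w \<Rightarrow> real^('d::finite)) \<Rightarrow> real \<Rightarrow> 'w \<Rightarrow> real^'n) \<Rightarrow> real^'n \<Rightarrow> (real \<Rightarrow> 'w \<Rightarrow> real^('d::finite)) \<Rightarrow> ereal" where
  "Jval P T Lam g X x u = Eer P (\<lambda>\<omega>. ereal (reward T Lam g X x u \<omega>))"

definition MF :: "'w measure \<Rightarrow> (real \<Rightarrow> 'w \<Rightarrow> real^('m::finite)) \<Rightarrow> real \<Rightarrow> (real^'d) set
     \<Rightarrow> (real^'n \<Rightarrow> (real \<Rightarrow> 'w \<Rightarrow> real^('d::finite)) \<Rightarrow> real \<Rightarrow> 'w \<Rightarrow> real^'n) \<Rightarrow> ((real \<Rightarrow> 'w \<Rightarrow> real^('d::finite)) \<Rightarrow> 'w \<Rightarrow> real) set" where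
  "MF P W T Uset X = {h. \<forall>x. \<forall>u\<in>UF P W T Uset X x.
       h u \<in> borel_measurable P \<and> Eer P (\<lambda>\<omega>. ereal (h u \<omega>)) \<le> 0}"

end

theory Submission
  imports Defs
begin

abbreviation "Ap P f \<equiv> (\<integral>\<^sup>+\<omega>. ennreal (f \<omega>) \<partial>P)"

lemma Eer_real:
  assumes f: "f \<in> borel_measurable P"
  shows "Eer P (\<lambda>\<omega>. ereal (f \<omega>)) =
     (if Ap P f = \<infinity> then \<infinity> else if Ap P (\<lambda>\<omega>. - f \<omega>) = \<infinity> then -\<infinity>
      else ereal (integral\<^sup>L P f))"
proof -
  have e: "enn2ereal a = ereal (enn2real a)" if "a \<noteq> \<infinity>" for a :: ennreal
    using that by (cases a rule: ennreal_cases) auto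
  have m: "\<And>\<omega>. e2ennreal (- ereal (f \<omega>)) = ennreal (- f \<omega>)" by simp
  show ?thesis
  proof (cases "Ap P f = \<infinity>")
    case True then show ?thesis by (simp add: Eer_def)
  next
    case False
    show ?thesis
    proof (cases "Ap P (\<lambda>\<omega>. - f \<omega>) = \<infinity>")
      case True then show ?thesis using False e by (simp add: Eer_def)
    next
      case F2: False
      have "integrable P f" using f False F2 by (simp add: real_integrable_def)
      then show ?thesis using False F2 e
        by (simp add: Eer_def real_lebesgue_integral_def)
    qed
  qed
qed

lemma Ap_add:
  assumes "f \<in> borel_measurable P" "g \<in> borel_measurable P"
  shows "Ap P (\<lambda>\<omega>. f \<omega> + g \<omega>) \<le> Ap P f + Ap P g"
proof -
  have "Ap P (\<lambda>\<omega>. f \<omega> + g \<omega>) \<le> (\<integral>\<^sup>+\<omega>. ennreal (f \<omega>) + ennreal (g \<omega>) \<partial>P)"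
  proof (rule nn_integral_mono)
    fix \<omega>
    have "ennreal (f \<omega> + g \<omega>) \<le> ennreal (max (f \<omega>) 0 + max (g \<omega>) 0)"
      by (intro ennreal_leI) auto
    also have "\<dots> = ennreal (max (f \<omega>) 0) + ennreal (max (g \<omega>) 0)"
      by (simp add: ennreal_plus)
    also have "\<dots> = ennreal (f \<omega>) + ennreal (g \<omega>)"
      by (simp add: max_def ennreal_neg)
    finally show "ennreal (f \<omega> + g \<omega>) \<le> ennreal (f \<omega>) + ennreal (g \<omega>)" .
  qed
  also have "\<dots> = Ap P f + Ap P g"
    using assms by (intro nn_integral_add) auto
  finally show ?thesis .
qed

lemma Ap_fin_add:
  assumes "f \<in> borel_measurable P" "g \<in> borel_measurable P"
    "Ap P f \<noteq> \<infinity>" "Ap P g \<noteq> \<infinity>"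
  shows "Ap P (\<lambda>\<omega>. f \<omega> + g \<omega>) \<noteq> \<infinity>"
  using Ap_add[OF assms(1,2)] assms(3,4)
  by (auto simp: top_unique)

lemma Ap_const:
  assumes "prob_space P"
  shows "Ap P (\<lambda>\<omega>. c) \<noteq> \<infinity>"
  using assms by (simp add: nn_integral_const prob_space.emeasure_space_1)

lemma Eer_mono:
  assumes "\<And>\<omega>. \<omega> \<in> space P \<Longrightarrow> f \<omega> \<le> g \<omega>"
  shows "Eer P f \<le> Eer P g"
proof -
  have 1: "(\<integral>\<^sup>+\<omega>. e2ennreal (f \<omega>) \<partial>P) \<le> (\<integral>\<^sup>+\<omega>. e2ennreal (g \<omega>) \<partial>P)"
    using assms by (intro nn_integral_mono) (simp add: e2ennreal_mono)
  have 2: "(\<integral>\<^sup>+\<omega>. e2ennreal (- g \<omega>) \<partial>P) \<le> (\<integral>\<^sup>+\<omega>. e2ennreal (- f \<omega>) \<partial>P)"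
    using assms by (intro nn_integral_mono) (simp add: e2ennreal_mono)
  show ?thesis
  proof (cases "(\<integral>\<^sup>+\<omega>. e2ennreal (g \<omega>) \<partial>P) = \<infinity>")
    case True then show ?thesis by (simp add: Eer_def)
  next
    case False
    then have "(\<integral>\<^sup>+\<omega>. e2ennreal (f \<omega>) \<partial>P) \<noteq> \<infinity>" using 1 by (auto simp: top_unique)
    then show ?thesis using False 1 2
      unfolding Eer_def by (auto intro!: ereal_minus_mono simp: less_eq_ennreal.rep_eq)
  qed
qed

lemma Eer_const:
  assumes "prob_space P"
  shows "Eer P (\<lambda>\<omega>. ereal c) = ereal c"
proof -
  have "Eer P (\<lambda>\<omega>. ereal ((\<lambda>_. c) \<omega>)) = ereal c"
    using assms Ap_const[OF assms, of c] Ap_const[OF assms, of "-c"]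
    by (subst Eer_real) (auto simp: prob_space.prob_space)
  then show ?thesis by simp
qed

lemma Eer_L3:
  assumes ps: "prob_space P" and f: "f \<in> borel_measurable P" and h: "h \<in> borel_measurable P"
    and hle: "Eer P (\<lambda>\<omega>. ereal (h \<omega>)) \<le> 0"
  shows "Eer P (\<lambda>\<omega>. ereal (f \<omega>)) \<le> Eer P (\<lambda>\<omega>. ereal (f \<omega> - h \<omega>))"
proof -
  have fh: "(\<lambda>\<omega>. f \<omega> - h \<omega>) \<in> borel_measurable P" using f h by auto
  have nf: "(\<lambda>\<omega>. - f \<omega>) \<in> borel_measurable P" and nh: "(\<lambda>\<omega>. - h \<omega>) \<in> borel_measurable P"
    using f h by auto
  show ?thesis
  proof (cases "Ap P (\<lambda>\<omega>. f \<omega> - h \<omega>) = \<infinity>")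
    case True then show ?thesis using Eer_real[OF fh] by simp
  next
    case A1: False
    have A2: "Ap P h \<noteq> \<infinity>" using hle Eer_real[OF h] by (auto split: if_splits)
    have A3: "Ap P f \<noteq> \<infinity>" using Ap_fin_add[OF fh h A1 A2] by simp
    show ?thesis
    proof (cases "Ap P (\<lambda>\<omega>. - f \<omega>) = \<infinity>")
      case True then show ?thesis using A3 Eer_real[OF f] by simp
    next
      case B1: False
      have B2: "Ap P (\<lambda>\<omega>. - h \<omega>) \<noteq> \<infinity>" using Ap_fin_add[OF fh nf A1 B1] by simp
      have B3: "Ap P (\<lambda>\<omega>. - (f \<omega> - h \<omega>)) \<noteq> \<infinity>" using Ap_fin_add[OF nf h B1 A2] by simp
      have If: "integrable P f" using f A3 B1 by (simp add: real_integrable_def)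
      have Ih: "integrable P h" using h A2 B2 by (simp add: real_integrable_def)
      have "integral\<^sup>L P h \<le> 0" using hle A2 B2 Eer_real[OF h] by simp
      moreover have "integral\<^sup>L P (\<lambda>\<omega>. f \<omega> - h \<omega>) = integral\<^sup>L P f - integral\<^sup>L P h"
        using If Ih by simp
      ultimately show ?thesis using A1 A3 B1 B3
        by (simp add: Eer_real[OF f] Eer_real[OF fh])
    qed
  qed
qed

lemma Eer_L4:
  assumes ps: "prob_space P" and f: "f \<in> borel_measurable P"
    and le: "Eer P (\<lambda>\<omega>. ereal (f \<omega>)) \<le> ereal c"
  shows "Eer P (\<lambda>\<omega>. ereal (f \<omega> - c)) \<le> 0"
proof -
  have fc: "(\<lambda>\<omega>. f \<omega> - c) \<in> borel_measurable P" using f by auto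
  have nf: "(\<lambda>\<omega>. - f \<omega>) \<in> borel_measurable P" and nfc: "(\<lambda>\<omega>. - (f \<omega> - c)) \<in> borel_measurable P"
    using f by auto
  have A1: "Ap P f \<noteq> \<infinity>" using le Eer_real[OF f] by (auto split: if_splits)
  have A2: "Ap P (\<lambda>\<omega>. f \<omega> - c) \<noteq> \<infinity>"
    using Ap_fin_add[OF f _ A1 Ap_const[OF ps, of "-c"]] by simp
  show ?thesis
  proof (cases "Ap P (\<lambda>\<omega>. - (f \<omega> - c)) = \<infinity>")
    case True then show ?thesis using A2 Eer_real[OF fc] by simp
  next
    case B1: False
    have B2: "Ap P (\<lambda>\<omega>. - f \<omega>) \<noteq> \<infinity>"
      using Ap_fin_add[OF nfc _ B1 Ap_const[OF ps, of "-c"]] by simp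
    have If: "integrable P f" using f A1 B2 by (simp add: real_integrable_def)
    have "integral\<^sup>L P f \<le> c" using le A1 B2 Eer_real[OF f] by simp
    moreover have "integral\<^sup>L P (\<lambda>\<omega>. f \<omega> - c) = integral\<^sup>L P f - c"
    proof -
      interpret prob_space P by (rule ps)
      show ?thesis using Bochner_Integration.integral_diff[OF If integrable_const[of c]] by (simp add: prob_space)
    qed
    ultimately show ?thesis using A2 B1
      by (simp add: Eer_real[OF fc])
  qed
qed
lemma reward_meas:
  fixes X :: "real^'n \<Rightarrow> (real \<Rightarrow> 'w \<Rightarrow> real^('d::finite)) \<Rightarrow> real \<Rightarrow> 'w \<Rightarrow> real^'n"
  assumes T: "0 \<le> T"
    and Xm: "(\<lambda>(s,\<omega>). X x u s \<omega>) \<in> borel_measurable (restrict_space lborel {0..T} \<Otimes>\<^sub>M P)"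
    and um: "(\<lambda>(s,\<omega>). u s \<omega>) \<in> borel_measurable (restrict_space lborel {0..T} \<Otimes>\<^sub>M P)"
    and Lam_meas: "Lam \<in> borel_measurable borel"
    and g_meas: "(\<lambda>(t,y,v). g t y v) \<in> borel_measurable borel"
  shows "reward T Lam g X x u \<in> borel_measurable P"
proof -
  let ?R = "restrict_space lborel {0..T}"
  have sf: "sigma_finite_measure ?R"
    by (rule sigma_finite_measure_restrict_space) (auto intro: lborel.sigma_finite_measure_axioms)
  have pT: "(\<lambda>\<omega>. (T, \<omega>)) \<in> measurable P (?R \<Otimes>\<^sub>M P)"
    by (rule measurable_Pair) (auto simp: T space_restrict_space)
  have XT: "(\<lambda>\<omega>. X x u T \<omega>) \<in> borel_measurable P"
    using measurable_comp[OF pT Xm] by (simp add: o_def)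
  have fstm: "(\<lambda>(s::real,\<omega>::'w). s) \<in> borel_measurable (?R \<Otimes>\<^sub>M P)"
    unfolding case_prod_beta
    by (rule measurable_compose[OF measurable_fst]) (rule measurable_restrict_space1, simp)
  have F: "(\<lambda>(s,\<omega>). g s (X x u s \<omega>) (u s \<omega>)) \<in> borel_measurable (?R \<Otimes>\<^sub>M P)"
  proof -
    have "(\<lambda>z. (case z of (s,\<omega>) \<Rightarrow> s, case z of (s,\<omega>) \<Rightarrow> X x u s \<omega>, case z of (s,\<omega>) \<Rightarrow> u s \<omega>))
            \<in> measurable (?R \<Otimes>\<^sub>M P) borel"
      using fstm Xm um by (intro borel_measurable_Pair) auto
    from measurable_comp[OF this g_meas] show ?thesis
      by (simp add: o_def case_prod_beta)
  qed
  have F2: "(\<lambda>(\<omega>,s). g s (X x u s \<omega>) (u s \<omega>)) \<in> borel_measurable (P \<Otimes>\<^sub>M ?R)"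
    using F by (subst measurable_pair_swap_iff) (simp add: case_prod_beta)
  have I: "(\<lambda>\<omega>. integral\<^sup>L ?R (\<lambda>s. g s (X x u s \<omega>) (u s \<omega>))) \<in> borel_measurable P"
    using sigma_finite_measure.borel_measurable_lebesgue_integral[OF sf, of "\<lambda>\<omega> s. g s (X x u s \<omega>) (u s \<omega>)" P] F2
    by (simp add: case_prod_beta)
  have eq: "\<And>\<omega>. (LINT s:{0..T}|lborel. g s (X x u s \<omega>) (u s \<omega>)) = integral\<^sup>L ?R (\<lambda>s. g s (X x u s \<omega>) (u s \<omega>))"
    by (simp add: set_lebesgue_integral_def integral_restrict_space)
  show ?thesis
    unfolding reward_def eq
    using measurable_comp[OF XT Lam_meas] I by (intro borel_measurable_add) (auto simp: o_def)
qed

theorem theorem3: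
  fixes P :: "'w measure" and T :: real
    and W :: "real \<Rightarrow> 'w \<Rightarrow> real^'m"
    and Uset :: "(real^'d) set"
    and b :: "real \<Rightarrow> real^'n \<Rightarrow> real^'d \<Rightarrow> real^'n"
    and \<sigma> :: "real \<Rightarrow> real^'n \<Rightarrow> real^'m^'n"
    and X :: "real^'n \<Rightarrow> (real \<Rightarrow> 'w \<Rightarrow> real^'d) \<Rightarrow> real \<Rightarrow> 'w \<Rightarrow> real^'n"
    and Lam :: "real^'n \<Rightarrow> real"
    and g :: "real \<Rightarrow> real^'n \<Rightarrow> real^'d \<Rightarrow> real"
    and x :: "real^'n"
  assumes T_pos: "0 < T"
    and BM: "brownian_motion P T W"
    and F_T: "sets P = nat_filt P W T"
    and b_cont: "continuous_on ({0..T} \<times> UNIV \<times> Uset) (\<lambda>(t,y,v). b t y v)"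
    and sigma_cont: "continuous_on ({0..T} \<times> UNIV) (\<lambda>(t,y). \<sigma> t y)"
    and lin_growth: "\<exists>C1. \<forall>t\<in>{0..T}. \<forall>y. \<forall>v\<in>Uset.
                        norm (b t y v) + norm (\<sigma> t y) \<le> C1 * (1 + norm y + norm v)"
    and lipschitz: "\<exists>L. \<forall>t\<in>{0..T}. \<forall>s\<in>{0..T}. \<forall>y z. \<forall>v\<in>Uset.
                        norm (b t y v - b s z v) + norm (\<sigma> t y - \<sigma> s z) \<le> L * (\<bar>t - s\<bar> + norm (y - z))"
    and X_init: "\<And>y u \<omega>. u \<in> Uall P T Uset \<Longrightarrow> \<omega> \<in> space P \<Longrightarrow> X y u 0 \<omega> = y"
    and X_meas: "\<And>y u. u \<in> Uall P T Uset \<Longrightarrow>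
                   (\<lambda>(s,\<omega>). X y u s \<omega>) \<in> borel_measurable (restrict_space lborel {0..T} \<Otimes>\<^sub>M P)"
    and X_moment: "\<And>y u. progressive P W T u \<Longrightarrow> (\<forall>s\<in>{0..T}. \<forall>\<omega>\<in>space P. u s \<omega> \<in> Uset) \<Longrightarrow>
                   (\<integral>\<^sup>+\<omega>. (\<integral>\<^sup>+s\<in>{0..T}. ennreal ((norm (u s \<omega>))\<^sup>2) \<partial>lborel) \<partial>P) < \<infinity> \<Longrightarrow>
                   (\<integral>\<^sup>+\<omega>. (SUP s\<in>{0..T}. ennreal ((norm (X y u s \<omega>))\<^sup>2)) \<partial>P) < \<infinity>"
    and Lam_meas: "Lam \<in> borel_measurable borel"
    and g_meas: "(\<lambda>(t,y,v). g t y v) \<in> borel_measurable borel"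
    and Lam_growth: "\<exists>C c. \<forall>y. \<bar>Lam y\<bar> \<le> C * (1 + norm y powr c)"
    and g_growth: "\<exists>C c. \<forall>t\<in>{0..T}. \<forall>y. \<forall>v\<in>Uset. \<bar>g t y v\<bar> \<le> C * (1 + norm y powr c + norm v powr c)"
  shows "(SUP u\<in>UF P W T Uset X x. Jval P T Lam g X x u) =
           (INF h\<in>MF P W T Uset X.
              Eer P (\<lambda>\<omega>. SUP u\<in>Uall P T Uset. ereal (reward T Lam g X x u \<omega> - h u \<omega>)))
         \<and> (let V = (SUP u\<in>UF P W T Uset X x. Jval P T Lam g X x u);
                hstar = (\<lambda>u \<omega>. reward T Lam g X x u \<omega> - real_of_ereal V)
            in \<bar>V\<bar> \<noteq> \<infinity> \<longrightarrow>
               hstar \<in> MF P W T Uset X \<and>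
               Eer P (\<lambda>\<omega>. SUP u\<in>Uall P T Uset. ereal (reward T Lam g X x u \<omega> - hstar u \<omega>)) =
                 (INF h\<in>MF P W T Uset X.
                    Eer P (\<lambda>\<omega>. SUP u\<in>Uall P T Uset. ereal (reward T Lam g X x u \<omega> - h u \<omega>))))"
proof -
  have ps: "prob_space P" using BM by (simp add: brownian_motion_def)
  have T0: "0 \<le> T" using T_pos by simp
  have sF: "sets (filt_measure P W T) = sets P"
    unfolding filt_measure_def F_T[symmetric]
    by (simp add: sets_measure_of sets.space_closed sets.sigma_sets_eq)
  have UF_sub: "u \<in> Uall P T Uset" if "u \<in> UF P W T Uset X y" for u y
  proof -
    have "(\<lambda>(s,\<omega>). u s \<omega>) \<in> borel_measurable (restrict_space lborel {0..T} \<Otimes>\<^sub>M filt_measure P W T)"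
      using that T0 by (auto simp: UF_def progressive_def)
    moreover have "sets (restrict_space lborel {0..T} \<Otimes>\<^sub>M filt_measure P W T) = sets (restrict_space lborel {0..T} \<Otimes>\<^sub>M P)"
      using sF by (rule sets_pair_measure_cong[OF refl])
    ultimately have "(\<lambda>(s,\<omega>). u s \<omega>) \<in> borel_measurable (restrict_space lborel {0..T} \<Otimes>\<^sub>M P)"
      using measurable_cong_sets by blast
    then show ?thesis using that by (auto simp: Uall_def UF_def)
  qed
  have UF_eq: "UF P W T Uset X y = UF P W T Uset X x" for y
    unfolding UF_def using X_moment by blast
  have Rm: "reward T Lam g X x u \<in> borel_measurable P" if "u \<in> Uall P T Uset" for u
    using that by (intro reward_meas[OF T0 X_meas _ Lam_meas g_meas]) (auto simp: Uall_def)
  define V where "V = (SUP u\<in>UF P W T Uset X x. Jval P T Lam g X x u)"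
  define S where "S = (\<lambda>h. Eer P (\<lambda>\<omega>. SUP u\<in>Uall P T Uset. ereal (reward T Lam g X x u \<omega> - h u \<omega>)))"
  have weak: "V \<le> S h" if h: "h \<in> MF P W T Uset X" for h
    unfolding V_def
  proof (rule SUP_least)
    fix u assume u: "u \<in> UF P W T Uset X x"
    have uA: "u \<in> Uall P T Uset" by (rule UF_sub[OF u])
    have hm: "h u \<in> borel_measurable P" and hE: "Eer P (\<lambda>\<omega>. ereal (h u \<omega>)) \<le> 0"
      using h u by (auto simp: MF_def)
    have "Jval P T Lam g X x u \<le> Eer P (\<lambda>\<omega>. ereal (reward T Lam g X x u \<omega> - h u \<omega>))"
      unfolding Jval_def by (rule Eer_L3[OF ps Rm[OF uA] hm hE])
    also have "\<dots> \<le> S h" unfolding S_def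
      by (rule Eer_mono) (rule SUP_upper[OF uA])
    finally show "Jval P T Lam g X x u \<le> S h" .
  qed
  have hc: "(\<lambda>u \<omega>. reward T Lam g X x u \<omega> - c) \<in> MF P W T Uset X" if Vc: "V \<le> ereal c" for c
    unfolding MF_def
  proof (intro CollectI allI ballI conjI)
    fix y u assume "u \<in> UF P W T Uset X y"
    then have u: "u \<in> UF P W T Uset X x" using UF_eq[of y] by simp
    have uA: "u \<in> Uall P T Uset" by (rule UF_sub[OF u])
    show "(\<lambda>\<omega>. reward T Lam g X x u \<omega> - c) \<in> borel_measurable P"
      using Rm[OF uA] by auto
    have "Jval P T Lam g X x u \<le> V" unfolding V_def by (rule SUP_upper[OF u])
    then have "Eer P (\<lambda>\<omega>. ereal (reward T Lam g X x u \<omega>)) \<le> ereal c"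
      using Vc unfolding Jval_def by simp
    then show "Eer P (\<lambda>\<omega>. ereal (reward T Lam g X x u \<omega> - c)) \<le> 0"
      by (rule Eer_L4[OF ps Rm[OF uA]])
  qed
  have Sc: "S (\<lambda>u \<omega>. reward T Lam g X x u \<omega> - c) \<le> ereal c" for c
  proof -
    have "S (\<lambda>u \<omega>. reward T Lam g X x u \<omega> - c) \<le> Eer P (\<lambda>\<omega>. ereal c)"
      unfolding S_def by (rule Eer_mono) (auto intro: SUP_least)
    then show ?thesis using Eer_const[OF ps] by simp
  qed
  have Sc_eq: "S (\<lambda>u \<omega>. reward T Lam g X x u \<omega> - c) = ereal c" if "Uall P T Uset \<noteq> {}" for c
  proof -
    have "(\<lambda>\<omega>. SUP u\<in>Uall P T Uset. ereal (reward T Lam g X x u \<omega> - (reward T Lam g X x u \<omega> - c)))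
          = (\<lambda>\<omega>. ereal c)"
      using that by (simp add: SUP_const)
    then show ?thesis unfolding S_def using Eer_const[OF ps, of c] by simp
  qed
  have INF_le: "(INF h\<in>MF P W T Uset X. S h) \<le> ereal c" if "V \<le> ereal c" for c
    using INF_lower[OF hc[OF that]] Sc[of c] by (rule order.trans)
  have duality: "V = (INF h\<in>MF P W T Uset X. S h)"
  proof (rule antisym)
    show "V \<le> (INF h\<in>MF P W T Uset X. S h)" by (rule INF_greatest) (rule weak)
    show "(INF h\<in>MF P W T Uset X. S h) \<le> V"
    proof (cases V)
      case (real r)
      have "V \<le> ereal r" using real by simp
      from INF_le[OF this] show ?thesis unfolding real .
    next
      case PInf then show ?thesis by (simp only: top_greatest ereal_less_eq(1))
    next
      case MInf
      have "(INF h\<in>MF P W T Uset X. S h) \<le> ereal c" for c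
        using INF_le[of c] unfolding MInf by simp
      then have "(INF h\<in>MF P W T Uset X. S h) = -\<infinity>" by (rule ereal_bot)
      then show ?thesis unfolding MInf by simp
    qed
  qed
  have second: "\<bar>V\<bar> \<noteq> \<infinity> \<longrightarrow>
       (\<lambda>u \<omega>. reward T Lam g X x u \<omega> - real_of_ereal V) \<in> MF P W T Uset X \<and>
       S (\<lambda>u \<omega>. reward T Lam g X x u \<omega> - real_of_ereal V) = (INF h\<in>MF P W T Uset X. S h)"
  proof
    assume fin: "\<bar>V\<bar> \<noteq> \<infinity>"
    then obtain r where r: "V = ereal r" by (cases V) auto
    have "UF P W T Uset X x \<noteq> {}" using r unfolding V_def by (auto simp: bot_ereal_def)
    then have ne: "Uall P T Uset \<noteq> {}" using UF_sub by blast
    show "(\<lambda>u \<omega>. reward T Lam g X x u \<omega> - real_of_ereal V) \<in> MF P W T Uset X \<and>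
       S (\<lambda>u \<omega>. reward T Lam g X x u \<omega> - real_of_ereal V) = (INF h\<in>MF P W T Uset X. S h)"
    proof
      have rr: "real_of_ereal V = r" using r by simp
      show "(\<lambda>u \<omega>. reward T Lam g X x u \<omega> - real_of_ereal V) \<in> MF P W T Uset X"
        unfolding rr using hc[of r] r by simp
      have I: "(INF h\<in>MF P W T Uset X. S h) = ereal r" by (rule trans[OF duality[symmetric] r])
      show "S (\<lambda>u \<omega>. reward T Lam g X x u \<omega> - real_of_ereal V) = (INF h\<in>MF P W T Uset X. S h)"
        unfolding rr I by (rule Sc_eq[OF ne])
    qed
  qed
  show ?thesis
    unfolding Let_def using conjI[OF duality second] unfolding V_def S_def by assumption
qed

end
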